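(* Let $G=(V,E)$ be a finite connected simple graph and $i\in V$. For $u,v\in V\setminus\{i\}$ write $u\sim_i v$ if there is a graph automorphism $\pi$ of $G$ with $\pi(i)=i$ and $\pi(u)=v$; this is an equivalence relation, and together with the singleton $\{i\}$ its classes partition $V$. Form the weighted graph $G_i$ whose vertices are these classes, with $\phi_i:V\to V(G_i)$ mapping each vertex to its class, vertex weights $w_V(x)=|\phi_i^{-1}(x)|$, and edge weights $w_E(x,y)=$ the number of edges of $G$ with one endpoint in $\phi_i^{-1}(x)$ and the other in $\phi_i^{-1}(y)$ (with $xy$ an edge of $G_i$ when this number is positive). Suppose that no $\sim_i$-equivalence class contains an edge of $G$. Let $\widehat f_i$ be any solution of the weighted problem on $G_i$ with special vertex $\phi_i(i)$, i.e. a function $g:V(G_i)\to\mathbb{R}$ minimizing $\sum_{xy\in E(G_i)} w_E(x,y)(g(x)-g(y))^2$ subject to $\sum_{x} w_V(x)g(x)^2=1$ and $g(\phi_i(i))=0$. Then the function $f_i:V\to\mathbb{R}$, $f_i(j)=\widehat f_i(\phi_i(j))$, is a solution of the problem $$\min_{g:V\to\mathbb{R},\ \|g\|_2=1,\ g(i)=0}\ \sum_{jk\in E}(g(k)-g(j))^2$$ on $G$.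
   Context: A graph automorphism is a bijection $\pi:V\to V$ with $xy\in E$ iff $\pi(x)\pi(y)\in E$. In the objective, each edge is counted once. *)

theory Defs
  imports Complex_Main
begin

definition simple_graph :: "'a set \<Rightarrow> ('a \<Rightarrow> 'a \<Rightarrow> bool) \<Rightarrow> bool" where
  "simple_graph V E \<longleftrightarrow> finite V \<and> (\<forall>a b. E a b \<longrightarrow> a \<in> V \<and> b \<in> V)
     \<and> (\<forall>a b. E a b \<longrightarrow> E b a) \<and> (\<forall>a. \<not> E a a)"

definition connected_graph :: "'a set \<Rightarrow> ('a \<Rightarrow> 'a \<Rightarrow> bool) \<Rightarrow> bool" where
  "connected_graph V E \<longleftrightarrow> (\<forall>u\<in>V. \<forall>v\<in>V. E\<^sup>*\<^sup>* u v)"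

definition graph_automorphism :: "'a set \<Rightarrow> ('a \<Rightarrow> 'a \<Rightarrow> bool) \<Rightarrow> ('a \<Rightarrow> 'a) \<Rightarrow> bool" where
  "graph_automorphism V E \<pi> \<longleftrightarrow> bij_betw \<pi> V V
     \<and> (\<forall>x\<in>V. \<forall>y\<in>V. E x y \<longleftrightarrow> E (\<pi> x) (\<pi> y))"

definition orbit_rel :: "'a set \<Rightarrow> ('a \<Rightarrow> 'a \<Rightarrow> bool) \<Rightarrow> 'a \<Rightarrow> 'a \<Rightarrow> 'a \<Rightarrow> bool" where
  "orbit_rel V E i u v \<longleftrightarrow> u \<in> V - {i} \<and> v \<in> V - {i}
     \<and> (\<exists>\<pi>. graph_automorphism V E \<pi> \<and> \<pi> i = i \<and> \<pi> u = v)"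

definition phi :: "'a set \<Rightarrow> ('a \<Rightarrow> 'a \<Rightarrow> bool) \<Rightarrow> 'a \<Rightarrow> 'a \<Rightarrow> 'a set" where
  "phi V E i u = (if u = i then {i} else {v. orbit_rel V E i u v})"

definition quot_vertices :: "'a set \<Rightarrow> ('a \<Rightarrow> 'a \<Rightarrow> bool) \<Rightarrow> 'a \<Rightarrow> 'a set set" where
  "quot_vertices V E i = phi V E i ` V"

definition vweight :: "'a set \<Rightarrow> ('a \<Rightarrow> 'a \<Rightarrow> bool) \<Rightarrow> 'a \<Rightarrow> 'a set \<Rightarrow> nat" where
  "vweight V E i x = card {u \<in> V. phi V E i u = x}"

definition eweight :: "'a set \<Rightarrow> ('a \<Rightarrow> 'a \<Rightarrow> bool) \<Rightarrow> 'a \<Rightarrow> 'a set \<Rightarrow> 'a set \<Rightarrow> nat" where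
  "eweight V E i x y = card {{a, b} | a b. a \<in> V \<and> b \<in> V \<and> E a b
       \<and> phi V E i a = x \<and> phi V E i b = y}"

definition quot_edges :: "'a set \<Rightarrow> ('a \<Rightarrow> 'a \<Rightarrow> bool) \<Rightarrow> 'a \<Rightarrow> ('a set \<times> 'a set) set" where
  "quot_edges V E i = {(x, y). x \<in> quot_vertices V E i \<and> y \<in> quot_vertices V E i
       \<and> eweight V E i x y > 0}"

(* objective on G_i; each edge counted once (ordered pairs, halved) *)
definition quot_energy :: "'a set \<Rightarrow> ('a \<Rightarrow> 'a \<Rightarrow> bool) \<Rightarrow> 'a \<Rightarrow> ('a set \<Rightarrow> real) \<Rightarrow> real" where
  "quot_energy V E i g = (1/2) * (\<Sum>(x, y)\<in>quot_edges V E i.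
       real (eweight V E i x y) * (g x - g y)^2)"

definition quot_feasible :: "'a set \<Rightarrow> ('a \<Rightarrow> 'a \<Rightarrow> bool) \<Rightarrow> 'a \<Rightarrow> ('a set \<Rightarrow> real) \<Rightarrow> bool" where
  "quot_feasible V E i g \<longleftrightarrow>
     (\<Sum>x\<in>quot_vertices V E i. real (vweight V E i x) * (g x)^2) = 1
     \<and> g (phi V E i i) = 0"

definition quot_solution :: "'a set \<Rightarrow> ('a \<Rightarrow> 'a \<Rightarrow> bool) \<Rightarrow> 'a \<Rightarrow> ('a set \<Rightarrow> real) \<Rightarrow> bool" where
  "quot_solution V E i g \<longleftrightarrow> quot_feasible V E i g
     \<and> (\<forall>h. quot_feasible V E i h \<longrightarrow> quot_energy V E i g \<le> quot_energy V E i h)"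

(* objective on G: sum over edges jk of (g k - g j)^2, each edge counted once *)
definition energy :: "'a set \<Rightarrow> ('a \<Rightarrow> 'a \<Rightarrow> bool) \<Rightarrow> ('a \<Rightarrow> real) \<Rightarrow> real" where
  "energy V E g = (1/2) * (\<Sum>(j, k)\<in>{(j, k). j \<in> V \<and> k \<in> V \<and> E j k}. (g k - g j)^2)"

definition feasible :: "'a set \<Rightarrow> 'a \<Rightarrow> ('a \<Rightarrow> real) \<Rightarrow> bool" where
  "feasible V i g \<longleftrightarrow> (\<Sum>j\<in>V. (g j)^2) = 1 \<and> g i = 0"

definition solution :: "'a set \<Rightarrow> ('a \<Rightarrow> 'a \<Rightarrow> bool) \<Rightarrow> 'a \<Rightarrow> ('a \<Rightarrow> real) \<Rightarrow> bool" where
  "solution V E i g \<longleftrightarrow> feasible V i g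
     \<and> (\<forall>h. feasible V i h \<longrightarrow> energy V E g \<le> energy V E h)"

end

theory Submission
  imports Defs "HOL-Analysis.L2_Norm" "HOL-Library.FuncSet"
begin

lemma vsum_lift:
  assumes "finite V"
  shows "(\<Sum>j\<in>V. F (phi V E i j)) = (\<Sum>x\<in>quot_vertices V E i. real (vweight V E i x) * F x)"
proof -
  have "(\<Sum>j\<in>V. F (phi V E i j)) = (\<Sum>x\<in>phi V E i ` V. \<Sum>j\<in>{j. j \<in> V \<and> phi V E i j = x}. F (phi V E i j))"
    by (rule sum.image_gen[OF assms])
  also have "\<dots> = (\<Sum>x\<in>phi V E i ` V. real (vweight V E i x) * F x)"
  proof (rule sum.cong)
    fix x assume "x \<in> phi V E i ` V"
    have "(\<Sum>j\<in>{j. j \<in> V \<and> phi V E i j = x}. F (phi V E i j)) = (\<Sum>j\<in>{j. j \<in> V \<and> phi V E i j = x}. F x)"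
      by (rule sum.cong) auto
    then show "(\<Sum>j\<in>{j. j \<in> V \<and> phi V E i j = x}. F (phi V E i j)) = real (vweight V E i x) * F x"
      by (simp add: vweight_def)
  qed simp
  finally show ?thesis by (simp add: quot_vertices_def)
qed

lemma energy_lift:
  assumes "simple_graph V E"
  shows "energy V E (\<lambda>j. g (phi V E i j)) = quot_energy V E i g"
proof -
  let ?P = "phi V E i"
  let ?Ed = "{(j, k). j \<in> V \<and> k \<in> V \<and> E j k}"
  let ?Q = "quot_vertices V E i"
  let ?F = "\<lambda>(x, y). (g x - g y)^2"
  let ?c = "\<lambda>(x,y). card {e\<in>?Ed. (\<lambda>(j,k). (?P j, ?P k)) e = (x,y)}"
  have finV: "finite V" using assms by (simp add: simple_graph_def)
  have finEd: "finite ?Ed" by (rule finite_subset[of _ "V \<times> V"]) (auto simp: finV)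
  have finQ: "finite (?Q \<times> ?Q)" by (simp add: quot_vertices_def finV)
  have "(\<Sum>(j, k)\<in>?Ed. (g (?P k) - g (?P j))^2) = (\<Sum>e\<in>?Ed. ?F ((\<lambda>(j,k). (?P j, ?P k)) e))"
    by (rule sum.cong) (auto simp: power2_commute)
  also have "\<dots> = (\<Sum>y\<in>?Q \<times> ?Q. \<Sum>e\<in>{e\<in>?Ed. (\<lambda>(j,k). (?P j, ?P k)) e = y}. ?F ((\<lambda>(j,k). (?P j, ?P k)) e))"
    by (rule sum.group[symmetric, OF finEd finQ]) (auto simp: quot_vertices_def)
  also have "\<dots> = (\<Sum>y\<in>?Q \<times> ?Q. real (?c y) * ?F y)"
  proof (rule sum.cong)
    fix y assume "y \<in> ?Q \<times> ?Q"
    have "(\<Sum>e\<in>{e\<in>?Ed. (\<lambda>(j,k). (?P j, ?P k)) e = y}. ?F ((\<lambda>(j,k). (?P j, ?P k)) e))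
       = (\<Sum>e\<in>{e\<in>?Ed. (\<lambda>(j,k). (?P j, ?P k)) e = y}. ?F y)"
      by (rule sum.cong) auto
    then show "(\<Sum>e\<in>{e\<in>?Ed. (\<lambda>(j,k). (?P j, ?P k)) e = y}. ?F ((\<lambda>(j,k). (?P j, ?P k)) e)) = real (?c y) * ?F y"
      by simp
  qed simp
  also have "\<dots> = (\<Sum>y\<in>?Q \<times> ?Q. real (case y of (x, y) \<Rightarrow> eweight V E i x y) * ?F y)"
  proof (rule sum.cong)
    fix y assume "y \<in> ?Q \<times> ?Q"
    obtain x z where y: "y = (x, z)" by (cases y)
    show "real (?c y) * ?F y = real (case y of (x, y) \<Rightarrow> eweight V E i x y) * ?F y"
    proof (cases "x = z")
      case True then show ?thesis by (simp add: y)
    next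
      case False
      let ?S = "{e\<in>?Ed. (\<lambda>(j,k). (?P j, ?P k)) e = (x, z)}"
      have inj: "inj_on (\<lambda>(a, b). {a, b}) ?S"
      proof (rule inj_onI)
        fix e1 e2 assume "e1 \<in> ?S" "e2 \<in> ?S" "(\<lambda>(a, b). {a, b}) e1 = (\<lambda>(a, b). {a, b}) e2"
        moreover obtain a1 b1 where e1: "e1 = (a1, b1)" by (cases e1)
        moreover obtain a2 b2 where e2: "e2 = (a2, b2)" by (cases e2)
        ultimately have "{a1, b1} = {a2, b2}" "?P a1 = x" "?P b1 = z" "?P a2 = x" "?P b2 = z" by auto
        then have "a1 = a2 \<and> b1 = b2" using False unfolding doubleton_eq_iff by metis
        then show "e1 = e2" using e1 e2 by simp
      qed
      have img: "(\<lambda>(a, b). {a, b}) ` ?S = {{a, b} | a b. a \<in> V \<and> b \<in> V \<and> E a b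
       \<and> ?P a = x \<and> ?P b = z}" (is "?L = ?R")
      proof
        show "?L \<subseteq> ?R" by (auto split: prod.splits)
        show "?R \<subseteq> ?L"
        proof
          fix s assume "s \<in> ?R"
          then obtain a b where "s = {a, b}" "a \<in> V" "b \<in> V" "E a b" "?P a = x" "?P b = z" by blast
          then show "s \<in> ?L" by (intro image_eqI[of _ _ "(a, b)"]) auto
        qed
      qed
      have "?c y = eweight V E i x z"
        unfolding eweight_def y using card_image[OF inj] img by simp
      then show ?thesis by (simp add: y)
    qed
  qed simp
  also have "\<dots> = (\<Sum>(x, y)\<in>quot_edges V E i. real (eweight V E i x y) * (g x - g y)^2)"
    unfolding quot_edges_def
    by (rule sum.mono_neutral_cong_right) (auto simp: finQ)
  finally show ?thesis unfolding energy_def quot_energy_def by simp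
qed

definition auts :: "'a set \<Rightarrow> ('a \<Rightarrow> 'a \<Rightarrow> bool) \<Rightarrow> 'a \<Rightarrow> ('a \<Rightarrow> 'a) set" where
  "auts V E i = {p. graph_automorphism V E p \<and> p i = i \<and> (\<forall>x. x \<notin> V \<longrightarrow> p x = x)}"

lemma auts_finite:
  assumes "finite V"
  shows "finite (auts V E i)"
proof -
  have inj: "inj_on (\<lambda>p. restrict p V) (auts V E i)"
  proof (rule inj_onI)
    fix p q assume "p \<in> auts V E i" "q \<in> auts V E i" "restrict p V = restrict q V"
    show "p = q"
    proof
      fix x show "p x = q x"
      proof (cases "x \<in> V")
        case True then show ?thesis using \<open>restrict p V = restrict q V\<close> by (metis restrict_apply)
      next
        case False then show ?thesis using \<open>p \<in> auts V E i\<close> \<open>q \<in> auts V E i\<close> unfolding auts_def by simp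
      qed
    qed
  qed
  have "(\<lambda>p. restrict p V) ` auts V E i \<subseteq> PiE V (\<lambda>_. V)"
    unfolding auts_def graph_automorphism_def bij_betw_def by auto
  then have "finite ((\<lambda>p. restrict p V) ` auts V E i)"
    by (rule finite_subset) (simp add: finite_PiE assms)
  then show ?thesis using finite_image_iff[OF inj] by simp
qed

lemma id_auts: "id \<in> auts V E i"
  unfolding auts_def graph_automorphism_def by simp

lemma auts_bij: "p \<in> auts V E i \<Longrightarrow> bij_betw p V V"
  unfolding auts_def graph_automorphism_def by simp

lemma auts_E: "p \<in> auts V E i \<Longrightarrow> x \<in> V \<Longrightarrow> y \<in> V \<Longrightarrow> E x y \<longleftrightarrow> E (p x) (p y)"
  unfolding auts_def graph_automorphism_def by simp

lemma auts_comp: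
  assumes "p \<in> auts V E i" "q \<in> auts V E i"
  shows "p \<circ> q \<in> auts V E i"
proof -
  have bq: "bij_betw q V V" and bp: "bij_betw p V V" using auts_bij[OF assms(2)] auts_bij[OF assms(1)] by auto
  have "bij_betw (p \<circ> q) V V" using bij_betw_trans[OF bq bp] .
  moreover have "\<forall>x\<in>V. \<forall>y\<in>V. E x y \<longleftrightarrow> E ((p \<circ> q) x) ((p \<circ> q) y)"
  proof (intro ballI)
    fix x y assume xy: "x \<in> V" "y \<in> V"
    then have "q x \<in> V" "q y \<in> V" using bq bij_betwE by blast+
    then show "E x y \<longleftrightarrow> E ((p \<circ> q) x) ((p \<circ> q) y)"
      using auts_E[OF assms(2) xy] auts_E[OF assms(1)] by simp
  qed
  ultimately show ?thesis using assms unfolding auts_def graph_automorphism_def by auto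
qed

lemma auts_rmul_bij:
  assumes "finite V" "q \<in> auts V E i"
  shows "bij_betw (\<lambda>p. p \<circ> q) (auts V E i) (auts V E i)"
proof -
  have bq: "bij_betw q V V" using auts_bij[OF assms(2)] by auto
  have sub: "(\<lambda>p. p \<circ> q) ` auts V E i \<subseteq> auts V E i" using auts_comp[OF _ assms(2)] by blast
  have inj: "inj_on (\<lambda>p. p \<circ> q) (auts V E i)"
  proof (rule inj_onI)
    fix p r assume pr: "p \<in> auts V E i" "r \<in> auts V E i" "p \<circ> q = r \<circ> q"
    show "p = r"
    proof
      fix y show "p y = r y"
      proof (cases "y \<in> V")
        case True
        then obtain x where x: "x \<in> V" "y = q x" using bq unfolding bij_betw_def by blast
        have "(p \<circ> q) x = (r \<circ> q) x" using pr(3) by simp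
        then show ?thesis using x by simp
      next
        case False then show ?thesis using pr(1,2) unfolding auts_def by simp
      qed
    qed
  qed
  have "(\<lambda>p. p \<circ> q) ` auts V E i = auts V E i"
    by (rule endo_inj_surj[OF auts_finite[OF assms(1)] sub inj])
  then show ?thesis using inj unfolding bij_betw_def by simp
qed

lemma auts_edge_bij:
  assumes "simple_graph V E" "p \<in> auts V E i"
  shows "bij_betw (\<lambda>(j, k). (p j, p k)) {(j, k). j \<in> V \<and> k \<in> V \<and> E j k} {(j, k). j \<in> V \<and> k \<in> V \<and> E j k}"
proof -
  let ?Ed = "{(j, k). j \<in> V \<and> k \<in> V \<and> E j k}"
  have finV: "finite V" using assms by (simp add: simple_graph_def)
  have finEd: "finite ?Ed" by (rule finite_subset[of _ "V \<times> V"]) (auto simp: finV)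
  have bp: "bij_betw p V V" using auts_bij[OF assms(2)] by auto
  have sub: "(\<lambda>(j, k). (p j, p k)) ` ?Ed \<subseteq> ?Ed"
    using auts_E[OF assms(2)] bij_betwE[OF bp] by auto
  have inj: "inj_on (\<lambda>(j, k). (p j, p k)) ?Ed"
    using bij_betw_imp_inj_on[OF bp] unfolding inj_on_def by auto
  show ?thesis using endo_inj_surj[OF finEd sub inj] inj unfolding bij_betw_def by simp
qed

lemma energy_auts:
  assumes "simple_graph V E" "p \<in> auts V E i"
  shows "energy V E (\<lambda>j. h (p j)) = energy V E h"
proof -
  let ?Ed = "{(j, k). j \<in> V \<and> k \<in> V \<and> E j k}"
  have "(\<Sum>(j, k)\<in>?Ed. (h (p k) - h (p j))^2) = (\<Sum>e\<in>?Ed. (\<lambda>(j,k). (h k - h j)^2) ((\<lambda>(j, k). (p j, p k)) e))"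
    by (rule sum.cong) auto
  also have "\<dots> = (\<Sum>(j, k)\<in>?Ed. (h k - h j)^2)"
    by (rule sum.reindex_bij_betw[OF auts_edge_bij[OF assms]])
  finally show ?thesis unfolding energy_def by simp
qed

lemma L2_diff_sq:
  "(L2_set a A - L2_set b A)^2 \<le> (\<Sum>x\<in>A. (a x - b x)^2)"
proof -
  have t1: "L2_set a A \<le> L2_set (\<lambda>x. a x - b x) A + L2_set b A"
    using L2_set_triangle_ineq[of "\<lambda>x. a x - b x" b A] by simp
  have t2: "L2_set b A \<le> L2_set (\<lambda>x. b x - a x) A + L2_set a A"
    using L2_set_triangle_ineq[of "\<lambda>x. b x - a x" a A] by simp
  have sym: "L2_set (\<lambda>x. b x - a x) A = L2_set (\<lambda>x. a x - b x) A"
    unfolding L2_set_def by (simp add: power2_commute)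
  have "\<bar>L2_set a A - L2_set b A\<bar> \<le> L2_set (\<lambda>x. a x - b x) A" using t1 t2 sym by linarith
  then have "(L2_set a A - L2_set b A)^2 \<le> (L2_set (\<lambda>x. a x - b x) A)^2"
    by (metis abs_ge_zero power2_abs power_mono)
  also have "\<dots> = (\<Sum>x\<in>A. (a x - b x)^2)"
    unfolding L2_set_def by (simp add: sum_nonneg)
  finally show ?thesis .
qed

lemma phi_self: "u \<in> V \<Longrightarrow> u \<in> phi V E i u"
  unfolding phi_def orbit_rel_def by (auto intro!: exI[of _ id] simp: graph_automorphism_def)

lemma phi_aut:
  assumes "u \<in> V" "v \<in> phi V E i u"
  shows "\<exists>q\<in>auts V E i. q u = v"
proof (cases "u = i")
  case True then have "v = u" using assms unfolding phi_def by simp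
  then show ?thesis using id_auts[of V E i] by (intro bexI[of _ id]) auto
next
  case False
  have "orbit_rel V E i u v" using assms False by (simp add: phi_def)
  then obtain p where p: "graph_automorphism V E p" "p i = i" "p u = v" "u \<in> V" "v \<in> V"
    unfolding orbit_rel_def by blast
  define q where "q = (\<lambda>x. if x \<in> V then p x else x)"
  have bp: "bij_betw p V V" using p(1) unfolding graph_automorphism_def by simp
  have "bij_betw q V V = bij_betw p V V" by (rule bij_betw_cong) (simp add: q_def)
  then have b: "bij_betw q V V" using bp by simp
  have e: "\<forall>x\<in>V. \<forall>y\<in>V. E x y \<longleftrightarrow> E (q x) (q y)"
    using p(1) unfolding graph_automorphism_def q_def by simp
  have qi: "q i = i" using p(2) unfolding q_def by simp
  have qo: "\<forall>x. x \<notin> V \<longrightarrow> q x = x" unfolding q_def by simp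
  have "q \<in> auts V E i" unfolding auts_def graph_automorphism_def using b e qi qo by blast
  moreover have "q u = v" using p unfolding q_def by simp
  ultimately show ?thesis by blast
qed

theorem theorem4:
  fixes V :: "'a set" and E :: "'a \<Rightarrow> 'a \<Rightarrow> bool" and i :: 'a
    and fhat :: "'a set \<Rightarrow> real"
  assumes "simple_graph V E"
    and "connected_graph V E"
    and "i \<in> V"
    and "\<forall>u v. orbit_rel V E i u v \<longrightarrow> \<not> E u v"
    and "quot_solution V E i fhat"
  shows "solution V E i (\<lambda>j. fhat (phi V E i j))"
proof -
  note sg = assms(1)
  have finV: "finite V" using sg by (simp add: simple_graph_def)
  let ?G = "auts V E i"
  let ?Ed = "{(j, k). j \<in> V \<and> k \<in> V \<and> E j k}"
  define n where "n = card ?G"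
  have finG: "finite ?G" by (rule auts_finite[OF finV])
  have npos: "n > 0" unfolding n_def using finG id_auts[of V E i] card_gt_0_iff by blast
  have qf: "quot_feasible V E i fhat" and qmin: "\<And>h. quot_feasible V E i h \<Longrightarrow> quot_energy V E i fhat \<le> quot_energy V E i h"
    using assms(5) unfolding quot_solution_def by auto
  have lift_feas: "feasible V i (\<lambda>j. fhat (phi V E i j))"
    using qf vsum_lift[OF finV, of "\<lambda>x. (fhat x)^2" E i] unfolding quot_feasible_def feasible_def by simp
  have "energy V E (\<lambda>j. fhat (phi V E i j)) \<le> energy V E h" if hf: "feasible V i h" for h
  proof -
    have h1: "(\<Sum>j\<in>V. (h j)^2) = 1" and h0: "h i = 0" using hf unfolding feasible_def by auto
    define s where "s j = L2_set (\<lambda>p. h (p j)) ?G / sqrt (real n)" for j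
    have s_sq: "(s j)^2 = (\<Sum>p\<in>?G. (h (p j))^2) / real n" for j
      unfolding s_def L2_set_def using npos by (simp add: power_divide sum_nonneg)
    have s_sym: "s (q j) = s j" if "q \<in> ?G" for q j
    proof -
      have "(\<Sum>p\<in>?G. (\<lambda>p. (h (p j))^2) (p \<circ> q)) = (\<Sum>p\<in>?G. (h (p j))^2)"
        by (rule sum.reindex_bij_betw[OF auts_rmul_bij[OF finV that]])
      then show ?thesis unfolding s_def L2_set_def by simp
    qed
    have s_norm: "(\<Sum>j\<in>V. (s j)^2) = 1"
    proof -
      have "(\<Sum>j\<in>V. (s j)^2) = (\<Sum>j\<in>V. \<Sum>p\<in>?G. (h (p j))^2) / real n"
        unfolding s_sq by (simp add: sum_divide_distrib)
      also have "\<dots> = (\<Sum>p\<in>?G. \<Sum>j\<in>V. (h (p j))^2) / real n"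
        by (subst sum.swap) simp
      also have "\<dots> = (\<Sum>p\<in>?G. 1) / real n"
      proof -
        have "(\<Sum>j\<in>V. (h (p j))^2) = 1" if "p \<in> ?G" for p
          using sum.reindex_bij_betw[OF auts_bij[OF that], of "\<lambda>j. (h j)^2"] h1 by simp
        then show ?thesis by simp
      qed
      also have "\<dots> = 1" using npos unfolding n_def by simp
      finally show ?thesis .
    qed
    have s_i: "s i = 0"
    proof -
      have "L2_set (\<lambda>p. h (p i)) ?G = 0"
        by (rule L2_set_0') (simp add: auts_def h0)
      then show ?thesis unfolding s_def by simp
    qed
    have s_energy: "energy V E s \<le> energy V E h"
    proof -
      have edge: "(s k - s j)^2 \<le> (\<Sum>p\<in>?G. (h (p k) - h (p j))^2) / real n" for j k
      proof -
        have "(s k - s j)^2 = (L2_set (\<lambda>p. h (p k)) ?G - L2_set (\<lambda>p. h (p j)) ?G)^2 / (sqrt (real n))^2"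
          unfolding s_def by (simp only: diff_divide_distrib[symmetric] power_divide)
        also have "\<dots> = (L2_set (\<lambda>p. h (p k)) ?G - L2_set (\<lambda>p. h (p j)) ?G)^2 / real n"
          by simp
        also have "\<dots> \<le> (\<Sum>p\<in>?G. (h (p k) - h (p j))^2) / real n"
          using L2_diff_sq npos by (intro divide_right_mono) auto
        finally show ?thesis .
      qed
      have "(\<Sum>(j, k)\<in>?Ed. (s k - s j)^2) \<le> (\<Sum>(j, k)\<in>?Ed. (\<Sum>p\<in>?G. (h (p k) - h (p j))^2) / real n)"
        by (rule sum_mono) (use edge in auto)
      also have "\<dots> = (\<Sum>p\<in>?G. \<Sum>(j, k)\<in>?Ed. (h (p k) - h (p j))^2) / real n"
        by (simp add: sum_divide_distrib case_prod_beta sum.swap[of _ ?Ed])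
      also have "\<dots> = (\<Sum>p\<in>?G. 2 * energy V E h) / real n"
      proof -
        have "(\<Sum>(j, k)\<in>?Ed. (h (p k) - h (p j))^2) = 2 * energy V E h" if "p \<in> ?G" for p
          using energy_auts[OF sg that, of h] unfolding energy_def by simp
        then show ?thesis by simp
      qed
      also have "\<dots> = 2 * energy V E h" using npos unfolding n_def by simp
      finally show ?thesis unfolding energy_def by simp
    qed
    define g where "g x = s (SOME v. v \<in> x)" for x
    have g_phi: "g (phi V E i u) = s u" if uV: "u \<in> V" for u
    proof -
      have ex: "\<exists>v. v \<in> phi V E i u" using phi_self[OF that] by blast
      define v where "v = (SOME v. v \<in> phi V E i u)"
      have "v \<in> phi V E i u" unfolding v_def using someI_ex[OF ex] .
      then obtain q where "q \<in> ?G" "q u = v" using phi_aut[OF uV, of v E i] by blast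
      then have "s v = s u" using s_sym by metis
      then show ?thesis unfolding g_def v_def by simp
    qed
    have gV: "(\<Sum>j\<in>V. (g (phi V E i j))^2) = (\<Sum>j\<in>V. (s j)^2)"
      by (rule sum.cong) (simp_all add: g_phi)
    have gf: "quot_feasible V E i g"
      using vsum_lift[OF finV, of "\<lambda>x. (g x)^2" E i] gV s_norm g_phi[OF assms(3)] s_i
      unfolding quot_feasible_def by simp
    have "energy V E (\<lambda>j. g (phi V E i j)) = energy V E s"
      unfolding energy_def by (rule arg_cong[where f="\<lambda>x. 1/2 * x"], rule sum.cong) (auto simp: g_phi)
    then have "quot_energy V E i g = energy V E s" using energy_lift[OF sg, of g i] by simp
    then have "quot_energy V E i fhat \<le> energy V E s" using qmin[OF gf] by simp
    then show ?thesis using energy_lift[OF sg, of fhat i] s_energy by simp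
  qed
  then show ?thesis using lift_feas unfolding solution_def by blast
qed

end
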